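(* Let $S$ be a closed surface equipped with a Euclidean metric with conical singularities $s_1,\dots,s_l,s_{l+1},\dots,s_n$ ($l\leq n$), where $\theta(s_i)\in(0,\pi)$ for $i=1,\dots,l$ and $\theta(s_i)\in(2\pi,\infty)$ for $i=l+1,\dots,n$. Then there exists a real number $C>0$ such that for every geodesic $g$ in $S$, $d(g(t),s_i)\geq C$ for all $i=1,\dots,l$ and all $t\in\mathbb{R}$.
   Context: A Euclidean surface with conical singularities: every non-singular point has a neighbourhood isometric to a Euclidean disk, each singular point $s$ has a neighbourhood isometric to a neighbourhood of the vertex of the standard cone $\{(r,t): r\geq0, t\in\mathbb{R}/\theta(s)\mathbb{Z}\}$ with metric $dr^2+r^2dt^2$, $\theta(s)$ being the cone angle. Here a geodesic means a local isometric map $g:\mathbb{R}\to S$ with no homotopically trivial self-intersections (i.e. there are no $t_1<t_2$ with $g(t_1)=g(t_2)$ and $g|_{[t_1,t_2]}$ a contractible loop); equivalently, its lift to the universal cover of $S$ is a global isometric map. *)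

theory Defs
  imports "HOL-Analysis.Analysis"
begin

text \<open>The standard cone of angle th: points (r,t) with r >= 0 and t in [0,th)
  (representing R/th Z); all points with r = 0 are identified with the vertex (0,0).\<close>

definition cone_carrier :: "real \<Rightarrow> (real \<times> real) set" where
  "cone_carrier th = {(r, t). 0 \<le> r \<and> 0 \<le> t \<and> t < th \<and> (r = 0 \<longrightarrow> t = 0)}"

definition cone_vertex :: "real \<times> real" where
  "cone_vertex = (0, 0)"

definition cone_angdist :: "real \<Rightarrow> real \<Rightarrow> real \<Rightarrow> real" where
  "cone_angdist th t1 t2 = min \<bar>t1 - t2\<bar> (th - \<bar>t1 - t2\<bar>)"

text \<open>Intrinsic (length) distance of the metric dr^2 + r^2 dt^2 on the cone of angle th.\<close>
definition cone_dist :: "real \<Rightarrow> real \<times> real \<Rightarrow> real \<times> real \<Rightarrow> real" where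
  "cone_dist th p q =
     (case p of (r1, t1) \<Rightarrow> case q of (r2, t2) \<Rightarrow>
        (let phi = cone_angdist th t1 t2 in
         if phi < pi then sqrt (r1\<^sup>2 + r2\<^sup>2 - 2 * r1 * r2 * cos phi) else r1 + r2))"

definition flat_point :: "'a::metric_space \<Rightarrow> bool" where
  "flat_point p \<longleftrightarrow>
     (\<exists>U (f :: 'a \<Rightarrow> real^2) c r. open U \<and> p \<in> U \<and> 0 < r \<and> f ` U = ball c r \<and>
        (\<forall>x\<in>U. \<forall>y\<in>U. dist (f x) (f y) = dist x y))"

definition conical_point :: "real \<Rightarrow> 'a::metric_space \<Rightarrow> bool" where
  "conical_point th p \<longleftrightarrow>
     (\<exists>U (f :: 'a \<Rightarrow> real \<times> real) r. open U \<and> p \<in> U \<and> 0 < r \<and> f p = cone_vertex \<and>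
        f ` U = {q \<in> cone_carrier th. fst q < r} \<and>
        (\<forall>x\<in>U. \<forall>y\<in>U. cone_dist th (f x) (f y) = dist x y))"

definition euclidean_cone_metric :: "'a::metric_space set \<Rightarrow> ('a \<Rightarrow> real) \<Rightarrow> bool" where
  "euclidean_cone_metric Sing th \<longleftrightarrow>
     finite Sing \<and> (\<forall>p. p \<notin> Sing \<longrightarrow> flat_point p) \<and>
     (\<forall>s\<in>Sing. 0 < th s \<and> conical_point (th s) s)"

definition local_isometric :: "(real \<Rightarrow> 'a::metric_space) \<Rightarrow> bool" where
  "local_isometric g \<longleftrightarrow>
     (\<forall>t. \<exists>e>0. \<forall>a\<in>ball t e. \<forall>b\<in>ball t e. dist (g a) (g b) = dist a b)"

definition geodesic :: "(real \<Rightarrow> 'a::metric_space) \<Rightarrow> bool" where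
  "geodesic g \<longleftrightarrow> local_isometric g \<and>
     \<not> (\<exists>t1 t2. t1 < t2 \<and> g t1 = g t2 \<and>
          (\<exists>a. homotopic_loops UNIV (g \<circ> (\<lambda>u. t1 + u * (t2 - t1))) (\<lambda>u. a)))"

end

theory Submission
  imports Defs
begin


lemma angdist_bounds:
  assumes "0 \<le> t1" "t1 < th" "0 \<le> t2" "t2 < th"
  shows "0 \<le> cone_angdist th t1 t2" "cone_angdist th t1 t2 \<le> th/2"
  using assms by (auto simp: cone_angdist_def min_def abs_if)

lemma cone_dist_formula:
  assumes "0 < th" "th < pi" "0 \<le> t1" "t1 < th" "0 \<le> t2" "t2 < th"
  shows "cone_dist th (r1,t1) (r2,t2) = sqrt (r1\<^sup>2 + r2\<^sup>2 - 2*r1*r2*cos (cone_angdist th t1 t2))"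
proof -
  have "cone_angdist th t1 t2 < pi" using angdist_bounds(2)[OF assms(3-6)] assms(1,2) by linarith
  then show ?thesis by (simp add: cone_dist_def Let_def)
qed

lemma cos_angdist_pos:
  assumes "0 < th" "th < pi" "0 \<le> t1" "t1 < th" "0 \<le> t2" "t2 < th"
  shows "cos (cone_angdist th t1 t2) \<ge> cos (th/2)" "cos (th/2) > 0"
proof -
  note b = angdist_bounds[OF assms(3-6)]
  show "cos (cone_angdist th t1 t2) \<ge> cos (th/2)"
    by (rule cos_monotone_0_pi_le) (use b assms in auto)
  show "cos (th/2) > 0" by (rule cos_gt_zero_pi) (use assms in auto)
qed

lemma li_uniform:
  assumes "local_isometric g" "compact K"
  obtains d where "d > 0" "\<And>u u'. u \<in> K \<Longrightarrow> \<bar>u - u'\<bar> < d \<Longrightarrow> dist (g u) (g u') = \<bar>u - u'\<bar>"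
proof -
  obtain e where e: "\<And>t. e t > 0" "\<And>t a b. a\<in>ball t (e t) \<Longrightarrow> b\<in>ball t (e t) \<Longrightarrow> dist (g a) (g b) = dist a b"
    using assms(1) unfolding local_isometric_def by metis
  have "K \<subseteq> \<Union> ((\<lambda>t. ball t (e t)) ` UNIV)"
    by (metis (no_types, lifting) UN_I UNIV_I centre_in_ball e(1) subsetI)
  from Heine_Borel_lemma[OF assms(2) this] obtain d where d: "d>0"
    "\<And>x. x \<in> K \<Longrightarrow> \<exists>G\<in>range (\<lambda>t. ball t (e t)). ball x d \<subseteq> G" by auto
  show ?thesis
  proof (rule that[OF d(1)])
    fix u u' assume "u \<in> K" "\<bar>u - u'\<bar> < d"
    then obtain t where "ball u d \<subseteq> ball t (e t)" using d(2) by blast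
    moreover have "u \<in> ball u d" "u' \<in> ball u d" using \<open>\<bar>u - u'\<bar> < d\<close> d(1) by (auto simp: dist_real_def)
    ultimately have "u \<in> ball t (e t)" "u' \<in> ball t (e t)" by blast+
    then show "dist (g u) (g u') = \<bar>u - u'\<bar>" using e(2)[of u t u'] by (simp add: dist_real_def)
  qed
qed

lemma li_lip_le:
  assumes "local_isometric g" "a \<le> b"
  shows "dist (g a) (g b) \<le> b - a"
proof -
  obtain d where d: "d > 0" "\<And>u u'. u \<in> {a..b} \<Longrightarrow> \<bar>u - u'\<bar> < d \<Longrightarrow> dist (g u) (g u') = \<bar>u - u'\<bar>"
    using li_uniform[OF assms(1), of "{a..b}"] by auto
  obtain N :: nat where N: "(b - a) / d < N" using reals_Archimedean2 by blast
  have Npos: "N > 0" using N d(1) assms(2) by (metis divide_nonneg_pos diff_ge_0_iff_ge gr0I le_less_trans of_nat_0 order_less_irrefl)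
  define h where "h = (b - a) / N"
  have h0: "h \<ge> 0" using assms(2) Npos by (simp add: h_def)
  have hd: "h < d" using N d(1) Npos by (simp add: h_def field_simps)
  have "k \<le> N \<Longrightarrow> dist (g a) (g (a + k*h)) \<le> k*h" for k
  proof (induction k)
    case 0 then show ?case by simp
  next
    case (Suc k)
    have "real k * h \<le> real N * h" using Suc.prems h0 by (intro mult_right_mono) auto
    moreover have "real N * h = b - a" using Npos by (simp add: h_def)
    ultimately have "a + k*h \<in> {a..b}" using h0 by auto
    then have "dist (g (a + k*h)) (g (a + Suc k * h)) = h" using d(2)[of "a+k*h" "a + Suc k * h"] hd h0
      by (simp add: algebra_simps)
    moreover have "dist (g a) (g (a + Suc k*h)) \<le> dist (g a) (g (a + k*h)) + dist (g (a + k*h)) (g (a + Suc k * h))"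
      by (rule dist_triangle)
    ultimately show ?case using Suc by (simp add: algebra_simps)
  qed
  from this[of N] Npos show ?thesis by (simp add: h_def)
qed

lemma li_lip: "local_isometric g \<Longrightarrow> dist (g a) (g b) \<le> \<bar>a - b\<bar>"
  by (cases "a \<le> b") (auto dest: li_lip_le[of g a b] li_lip_le[of g b a] simp: dist_commute)

lemma li_cont: assumes "local_isometric g" shows "continuous_on S g"
  unfolding continuous_on_iff
  by (metis assms dist_real_def le_less_trans li_lip)



locale chart =
  fixes th :: real and U :: "'a::metric_space set" and f :: "'a \<Rightarrow> real \<times> real" and r :: real
    and s :: 'a and e :: real
  assumes th: "0 < th" "th < pi"
    and sU: "s \<in> U" and fs: "f s = cone_vertex"
    and fU: "f ` U = {q \<in> cone_carrier th. fst q < r}"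
    and iso: "\<And>x y. x\<in>U \<Longrightarrow> y\<in>U \<Longrightarrow> cone_dist th (f x) (f y) = dist x y"
    and e: "e > 0" "ball s e \<subseteq> U"
begin

lemma carrier: assumes "x \<in> U"
  shows "0 \<le> fst (f x)" "0 \<le> snd (f x)" "snd (f x) < th" "fst (f x) = 0 \<Longrightarrow> snd (f x) = 0" "fst (f x) < r"
proof -
  have "f x \<in> f ` U" using assms by blast
  then show "0 \<le> fst (f x)" "0 \<le> snd (f x)" "snd (f x) < th" "fst (f x) = 0 \<Longrightarrow> snd (f x) = 0" "fst (f x) < r"
    unfolding fU cone_carrier_def by auto
qed

lemma fst_dist: assumes "x \<in> U" shows "fst (f x) = dist x s"
proof -
  obtain a b where ab: "f x = (a,b)" by fastforce
  have "dist x s = cone_dist th (a,b) (0,0)" using iso[OF assms sU] fs ab by (simp add: cone_vertex_def)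
  also have "\<dots> = sqrt (a\<^sup>2)" using cone_dist_formula[of th b 0 a 0] carrier[OF assms] ab th by simp
  also have "\<dots> = a" using carrier(1)[OF assms] ab by simp
  finally show ?thesis using ab by simp
qed

lemma finj: assumes "x \<in> U" "y \<in> U" "f x = f y" shows "x = y"
proof -
  obtain a b where ab: "f x = (a,b)" by fastforce
  have "dist x y = cone_dist th (a,b) (a,b)" using iso[OF assms(1,2)] assms(3) ab by simp
  also have "\<dots> = sqrt (a\<^sup>2 + a\<^sup>2 - 2*a*a*cos 0)"
    using cone_dist_formula[of th b b a a] carrier[OF assms(1)] ab th by (simp add: cone_angdist_def)
  also have "\<dots> = 0" by (simp add: power2_eq_square)
  finally show ?thesis by simp
qed

lemma dist_formula: assumes "x \<in> U" "y \<in> U"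
  shows "dist x y = sqrt ((dist x s)\<^sup>2 + (dist y s)\<^sup>2
            - 2 * dist x s * dist y s * cos (cone_angdist th (snd (f x)) (snd (f y))))"
proof -
  have "f x = (dist x s, snd (f x))" "f y = (dist y s, snd (f y))"
    using fst_dist assms by (metis prod.collapse)+
  then show ?thesis using iso[OF assms] cone_dist_formula[of th "snd (f x)" "snd (f y)" "dist x s" "dist y s"]
      carrier[OF assms(1)] carrier[OF assms(2)] th by metis
qed

end

locale chart_curve = chart th U f r s e
  for th and U :: "'a::metric_space set" and f r s e +
  fixes g :: "real \<Rightarrow> 'a"
  assumes g: "local_isometric g"
begin

lemma g_in: "dist (g u) s < e \<Longrightarrow> g u \<in> U"
  using e(2) by (auto simp: dist_commute)

lemma novertex: "g u \<noteq> s"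
proof
  assume gu: "g u = s"
  obtain eu where eu: "eu > 0" "\<And>a b. a\<in>ball u eu \<Longrightarrow> b\<in>ball u eu \<Longrightarrow> dist (g a) (g b) = dist a b"
    using g unfolding local_isometric_def by blast
  define \<eta> where "\<eta> = min eu e / 2"
  have \<eta>: "\<eta> > 0" "\<eta> < eu" "\<eta> < e" using eu(1) e(1) by (auto simp: \<eta>_def)
  have ina: "u - \<eta> \<in> ball u eu" "u + \<eta> \<in> ball u eu" "u \<in> ball u eu" using \<eta> eu by (auto simp: dist_real_def)
  have d1: "dist (g (u-\<eta>)) s = \<eta>" using eu(2)[OF ina(1) ina(3)] gu \<eta> by (simp add: dist_real_def)
  have d2: "dist (g (u+\<eta>)) s = \<eta>" using eu(2)[OF ina(2) ina(3)] gu \<eta> by (simp add: dist_real_def)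
  have d3: "dist (g (u-\<eta>)) (g (u+\<eta>)) = 2*\<eta>" using eu(2)[OF ina(1) ina(2)] \<eta> by (simp add: dist_real_def)
  have U1: "g (u-\<eta>) \<in> U" "g (u+\<eta>) \<in> U" using g_in d1 d2 \<eta> by auto
  define c where "c = cos (cone_angdist th (snd (f (g (u-\<eta>)))) (snd (f (g (u+\<eta>)))))"
  have cpos: "c > 0" using cos_angdist_pos[OF th] carrier[OF U1(1)] carrier[OF U1(2)] unfolding c_def
    by (meson less_le_trans)
  have "2*\<eta> = sqrt (\<eta>\<^sup>2 + \<eta>\<^sup>2 - 2*\<eta>*\<eta>*c)" using dist_formula[OF U1] d1 d2 d3 c_def by simp
  then have "(2*\<eta>)\<^sup>2 = \<eta>\<^sup>2 + \<eta>\<^sup>2 - 2*\<eta>*\<eta>*c"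
    using \<eta>(1) by (metis real_sqrt_gt_0_iff real_sqrt_pow2 less_le zero_less_mult_iff zero_less_numeral)
  then have "\<eta>*\<eta>*(1 + c) = 0" by (simp add: power2_eq_square algebra_simps)
  then show False using \<eta> cpos by simp
qed

end


lemma cis_le: "cmod (cis x - cis y) \<le> \<bar>x - y\<bar>"
proof -
  have "cis x - cis y = cis y * (cis (x - y) - 1)" by (simp add: cis_divide[symmetric] field_simps)
  then have n: "cmod (cis x - cis y) = cmod (cis (x-y) - 1)" by (simp add: norm_mult)
  define d where "d = x - y"
  have "(cmod (cis d - 1))\<^sup>2 = (cos d - 1)\<^sup>2 + (sin d)\<^sup>2" by (simp add: cmod_power2)
  also have "\<dots> = 2 - 2 * cos d" using sin_cos_squared_add[of d] by (simp add: power2_eq_square algebra_simps)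
  also have "\<dots> = 4 * (sin (d/2))\<^sup>2" using cos_double_sin[of "d/2"] by simp
  also have "\<dots> \<le> d\<^sup>2"
  proof -
    have "\<bar>sin (d/2)\<bar> \<le> \<bar>d/2\<bar>" by (rule abs_sin_x_le_abs_x)
    then have "(sin (d/2))\<^sup>2 \<le> (d/2)\<^sup>2" by (metis power2_abs power_mono abs_ge_zero)
    then show ?thesis by (simp add: power2_eq_square)
  qed
  finally have "(cmod (cis d - 1))\<^sup>2 \<le> \<bar>d\<bar>\<^sup>2" by simp
  then have "cmod (cis d - 1) \<le> \<bar>d\<bar>" by (rule power2_le_imp_le) simp
  then show ?thesis using n d_def by simp
qed

lemma cis_shift: "cis (x - 2*pi) = cis x"
  by (simp add: complex_eq_iff cos_diff sin_diff)

lemma cis_angdist: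
  assumes "0 < th" "0 \<le> t" "t < th" "0 \<le> t'" "t' < th"
  shows "cmod (cis (2*pi*t/th) - cis (2*pi*t'/th)) \<le> 2*pi/th * cone_angdist th t t'"
proof (cases "\<bar>t - t'\<bar> \<le> th - \<bar>t - t'\<bar>")
  case True
  then have "cone_angdist th t t' = \<bar>t - t'\<bar>" by (simp add: cone_angdist_def)
  moreover have "\<bar>2*pi*t/th - 2*pi*t'/th\<bar> = 2*pi/th * \<bar>t - t'\<bar>"
  proof -
    have "2*pi*t/th - 2*pi*t'/th = (2*pi/th) * (t - t')" using assms(1) by (simp add: field_simps)
    then show ?thesis using assms(1) by (simp add: abs_mult)
  qed
  ultimately show ?thesis using cis_le[of "2*pi*t/th" "2*pi*t'/th"] by simp
next
  case False
  then have ad: "cone_angdist th t t' = th - \<bar>t - t'\<bar>" by (simp add: cone_angdist_def)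
  show ?thesis
  proof (cases "t' \<le> t")
    case True
    have "cis (2*pi*t/th) = cis (2*pi*(t-th)/th)" using cis_shift[of "2*pi*t/th"] assms(1)
      by (simp add: field_simps)
    moreover have "\<bar>2*pi*(t-th)/th - 2*pi*t'/th\<bar> = 2*pi/th * (th - \<bar>t - t'\<bar>)"
    proof -
      have "2*pi*(t-th)/th - 2*pi*t'/th = (2*pi/th) * (t - th - t')" using assms(1) by (simp add: field_simps)
      then show ?thesis using assms True by (simp add: abs_mult)
    qed
    ultimately show ?thesis using cis_le[of "2*pi*(t-th)/th" "2*pi*t'/th"] ad by simp
  next
    case False
    have "cis (2*pi*t'/th) = cis (2*pi*(t'-th)/th)" using cis_shift[of "2*pi*t'/th"] assms(1)
      by (simp add: field_simps)
    moreover have "\<bar>2*pi*t/th - 2*pi*(t'-th)/th\<bar> = 2*pi/th * (th - \<bar>t - t'\<bar>)"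
    proof -
      have "2*pi*t/th - 2*pi*(t'-th)/th = (2*pi/th) * (t + th - t')" using assms(1) by (simp add: field_simps)
      then show ?thesis using assms False by (simp add: abs_mult)
    qed
    ultimately show ?thesis using cis_le[of "2*pi*t/th" "2*pi*(t'-th)/th"] ad by simp
  qed
qed

lemma angdist_lift:
  assumes "0 < th" "0 \<le> t" "t < th" "0 \<le> t'" "t' < th"
    and "t = x1 + of_int k * th" "t' = x2 + of_int k' * th" "\<bar>x1 - x2\<bar> < th/2"
  shows "cone_angdist th t t' = \<bar>x1 - x2\<bar>"
proof -
  define j where "j = k - k'"
  have tt: "t - t' = (x1 - x2) + of_int j * th" using assms(6,7) by (simp add: j_def algebra_simps)
  have "\<bar>t - t'\<bar> < th" using assms(2-5) by auto
  moreover have "\<bar>of_int j * th\<bar> \<le> \<bar>t - t'\<bar> + \<bar>x1 - x2\<bar>"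
    using abs_triangle_ineq4[of "t - t'" "x1 - x2"] tt by simp
  ultimately have "\<bar>of_int j * th\<bar> < 3/2 * th" using assms(8) by linarith
  then have "\<bar>real_of_int j\<bar> < 3/2" using assms(1) by (simp add: abs_mult)
  then have "j = -1 \<or> j = 0 \<or> j = 1" by linarith
  then show ?thesis using tt assms(1-5,8) by (auto simp: cone_angdist_def abs_if min_def)
qed

lemma norm_cis_formula:
  "(cmod (complex_of_real a * cis x - complex_of_real b * cis y))\<^sup>2 = a\<^sup>2 + b\<^sup>2 - 2*a*b*cos (x - y)"
proof -
  have "(cmod (complex_of_real a * cis x - complex_of_real b * cis y))\<^sup>2
      = (a * cos x - b * cos y)\<^sup>2 + (a * sin x - b * sin y)\<^sup>2" by (simp add: cmod_power2)
  also have "\<dots> = a\<^sup>2 * ((sin x)\<^sup>2 + (cos x)\<^sup>2) + b\<^sup>2 * ((sin y)\<^sup>2 + (cos y)\<^sup>2) - 2*a*b*(cos x * cos y + sin x * sin y)"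
    by (simp only: power2_eq_square) algebra
  also have "\<dots> = a\<^sup>2 + b\<^sup>2 - 2*a*b*cos (x - y)"
    by (simp only: sin_cos_squared_add cos_diff mult_1_right)
  finally show ?thesis .
qed

lemma lawcos_nonneg: assumes "0 \<le> (a::real)" "0 \<le> b" "c \<le> 1" shows "0 \<le> a\<^sup>2 + b\<^sup>2 - 2*a*b*c"
proof -
  have "a\<^sup>2 + b\<^sup>2 - 2*a*b*c = (a - b)\<^sup>2 + 2*(a*b)*(1 - c)" by (simp add: power2_eq_square algebra_simps)
  moreover have "0 \<le> 2*(a*b)*(1 - c)" using assms by simp
  ultimately show ?thesis by (metis add_nonneg_nonneg zero_le_power2)
qed



lemma collinear3:
  fixes P :: "real \<Rightarrow> complex"
  assumes "x < y" "y < z" "cmod (P z - P x) = z - x" "cmod (P y - P x) = y - x" "cmod (P z - P y) = z - y"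
  shows "P y - P x = of_real ((y - x)/(z - x)) * (P z - P x)"
proof -
  define v1 where "v1 = P y - P x"
  define v2 where "v2 = P z - P y"
  have "norm (v1 + v2) = norm v1 + norm v2" using assms by (simp add: v1_def v2_def)
  then have "norm v1 *\<^sub>R v2 = norm v2 *\<^sub>R v1" by (simp add: norm_triangle_eq)
  then have e: "of_real (y - x) * v2 = of_real (z - y) * v1" using assms by (simp add: v1_def v2_def scaleR_conv_of_real)
  have "of_real (z - x) * v1 = of_real (y - x) * (v1 + v2)"
    using e by (simp add: algebra_simps)
  then have "v1 = of_real ((y - x)/(z - x)) * (v1 + v2)" using assms(1,2)
    by (simp add: field_simps)
  then show ?thesis by (simp add: v1_def v2_def)
qed

lemma affine_of_local_iso:
  fixes P :: "real \<Rightarrow> complex"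
  assumes ab: "a \<le> b" and d: "\<delta> > 0"
    and iso: "\<And>u u'. u\<in>{a..b} \<Longrightarrow> u'\<in>{a..b} \<Longrightarrow> \<bar>u - u'\<bar> < \<delta> \<Longrightarrow> cmod (P u - P u') = \<bar>u - u'\<bar>"
  obtains w where "cmod w = 1" "\<And>u. u\<in>{a..b} \<Longrightarrow> P u = P a + of_real (u - a) * w"
proof (cases "a = b")
  case True
  show ?thesis by (rule that[of 1]) (use True in auto)
next
  case False
  then have ab': "a < b" using ab by simp
  obtain N :: nat where N: "2 * (b - a) / \<delta> < N" using reals_Archimedean2 by blast
  have Npos: "N > 0" using N d ab' by (metis divide_pos_pos diff_gt_0_iff_gt gr0I less_asym of_nat_0 zero_less_numeral mult_pos_pos)
  define h where "h = (b - a) / N"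
  have h0: "h > 0" using ab' Npos by (simp add: h_def)
  have hd: "2 * h < \<delta>" using N d Npos by (simp add: h_def field_simps)
  have Nh: "real N * h = b - a" using Npos by (simp add: h_def)
  have grid: "a + real k * h \<in> {a..b}" if "k \<le> N" for k
  proof -
    have "real k * h \<le> real N * h" using that h0 by (intro mult_right_mono) auto
    then show ?thesis using Nh h0 by auto
  qed
  have isoh: "cmod (P y - P x) = y - x" if "x \<in> {a..b}" "y \<in> {a..b}" "x \<le> y" "y - x < \<delta>" for x y
    using iso[OF that(2,1)] that(3,4) by simp
  define d0 where "d0 = P (a + h) - P a"
  have step: "P (a + real (Suc k) * h) - P (a + real k * h) = d0" if "k < N" for k
    using that
  proof (induction k)
    case 0 then show ?case by (simp add: d0_def)
  next
    case (Suc k)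
    define x where "x = a + real k * h"
    have xs: "a + real (Suc k) * h = x + h" "a + real (Suc (Suc k)) * h = x + 2*h"
      by (simp_all add: x_def algebra_simps)
    have g1: "a + real k * h \<in> {a..b}" by (rule grid) (use Suc.prems in simp)
    have g2: "a + real (Suc k) * h \<in> {a..b}" by (rule grid) (use Suc.prems in simp)
    have g3: "a + real (Suc (Suc k)) * h \<in> {a..b}" by (rule grid) (use Suc.prems in simp)
    have in3: "x \<in> {a..b}" "x + h \<in> {a..b}" "x + 2*h \<in> {a..b}"
      using g1 g2 g3 unfolding xs x_def by auto
    have "P (x+h) - P x = of_real (((x+h) - x)/((x+2*h) - x)) * (P (x+2*h) - P x)"
      by (rule collinear3) (use h0 hd in3 isoh[of x "x+2*h"] isoh[of x "x+h"] isoh[of "x+h" "x+2*h"] in auto)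
    then have "P (x+h) - P x = of_real (1/2) * (P (x+2*h) - P x)" using h0 by simp
    then have "P (x+2*h) - P (x+h) = P (x+h) - P x" by (simp add: field_simps)
    moreover have "P (x+h) - P x = d0"
    proof -
      have "k < N" using Suc.prems by simp
      from Suc.IH[OF this] show ?thesis unfolding xs(1) x_def[symmetric] .
    qed
    ultimately show ?case unfolding xs by simp
  qed
  have lin: "P (a + real k * h) = P a + of_nat k * d0" if "k \<le> N" for k
    using that
  proof (induction k)
    case 0 then show ?case by simp
  next
    case (Suc k)
    then show ?case using step[of k] by (simp add: algebra_simps)
  qed
  define w where "w = d0 / of_real h"
  have d0n: "cmod d0 = h" unfolding d0_def using isoh[of a "a+h"] grid[of 1] Npos h0 hd ab by auto
  show ?thesis
  proof (rule that[of w])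
    show "cmod w = 1" using d0n h0 by (simp add: w_def norm_divide)
    fix u assume u: "u \<in> {a..b}"
    define k where "k = nat \<lfloor>(u - a) / h\<rfloor>"
    have k1: "real k \<le> (u - a)/h" "(u - a)/h < real k + 1" using u h0 unfolding k_def by auto
    have k2: "real k * h \<le> u - a" "u - a < real k * h + h" using k1 h0 by (auto simp: field_simps)
    show "P u = P a + of_real (u - a) * w"
    proof (cases "k < N")
      case False
      then have "real N \<le> real k" by simp
      then have "real N * h \<le> real k * h" using h0 by (intro mult_right_mono) auto
      then have "u = a + real N * h" using k2 Nh u by auto
      then show ?thesis using lin[of N] h0 Npos by (simp add: w_def Nh field_simps)
    next
      case True
      define x where "x = a + real k * h"
      have xin: "x \<in> {a..b}" "x + h \<in> {a..b}" using grid[of k] grid[of "Suc k"] True by (auto simp: x_def algebra_simps)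
      have Px: "P x = P a + of_nat k * d0" using lin[of k] True by (simp add: x_def)
      have Pxh: "P (x + h) - P x = d0" using step[OF True] by (simp add: x_def algebra_simps)
      show ?thesis
      proof (cases "u = x")
        case True
        then show ?thesis using Px h0 by (simp add: w_def x_def field_simps)
      next
        case False
        then have xu: "x < u" "u < x + h" using k2 by (auto simp: x_def)
        have "P u - P x = of_real ((u - x)/((x+h) - x)) * (P (x+h) - P x)"
          by (rule collinear3) (use xu hd h0 xin u isoh[of x "x+h"] isoh[of x u] isoh[of u "x+h"] in auto)
        then have "P u = P x + of_real ((u - x)/h) * d0" using Pxh by (simp add: algebra_simps)
        then show ?thesis using Px h0 by (simp add: w_def x_def field_simps)
      qed
    qed
  qed
qed



lemma angdist_sym: "cone_angdist th t t' = cone_angdist th t' t"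
  by (simp add: cone_angdist_def abs_minus_commute)

context chart_curve
begin

lemma win_facts: assumes "dist (g u) s < e"
  shows "g u \<in> U" "dist (g u) s > 0" "0 \<le> snd (f (g u))" "snd (f (g u)) < th"
proof -
  show gu: "g u \<in> U" using g_in assms .
  show "dist (g u) s > 0" using novertex[of u] by simp
  show "0 \<le> snd (f (g u))" "snd (f (g u)) < th" using carrier[OF gu] by auto
qed

lemma cos_formula: assumes "dist (g u) s < e" "dist (g v) s < e"
  shows "cos (cone_angdist th (snd (f (g u))) (snd (f (g v))))
    = ((dist (g u) s)\<^sup>2 + (dist (g v) s)\<^sup>2 - (dist (g u) (g v))\<^sup>2) / (2 * dist (g u) s * dist (g v) s)"
proof -
  note fu = win_facts[OF assms(1)] and fv = win_facts[OF assms(2)]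
  define c where "c = cos (cone_angdist th (snd (f (g u))) (snd (f (g v))))"
  define X where "X = (dist (g u) s)\<^sup>2 + (dist (g v) s)\<^sup>2 - 2 * dist (g u) s * dist (g v) s * c"
  have X0: "0 \<le> X" unfolding X_def by (rule lawcos_nonneg) (auto simp: c_def)
  have "dist (g u) (g v) = sqrt X" using dist_formula[OF fu(1) fv(1)] by (simp add: X_def c_def)
  then have "(dist (g u) (g v))\<^sup>2 = X" using X0 by simp
  then show ?thesis using fu(2) fv(2) unfolding c_def[symmetric] X_def by (simp add: field_simps)
qed

lemma angdist_arccos: assumes "dist (g u) s < e" "dist (g v) s < e"
  shows "cone_angdist th (snd (f (g u))) (snd (f (g v)))
    = arccos (((dist (g u) s)\<^sup>2 + (dist (g v) s)\<^sup>2 - (dist (g u) (g v))\<^sup>2) / (2 * dist (g u) s * dist (g v) s))"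
proof -
  note fu = win_facts[OF assms(1)] and fv = win_facts[OF assms(2)]
  have "0 \<le> cone_angdist th (snd (f (g u))) (snd (f (g v)))" "cone_angdist th (snd (f (g u))) (snd (f (g v))) \<le> pi"
    using angdist_bounds[OF fu(3,4) fv(3,4)] th by auto
  then show ?thesis using cos_formula[OF assms] arccos_cos by metis
qed

lemma z_cont:
  assumes W: "\<forall>u\<in>{a..b}. dist (g u) s < e"
  shows "continuous_on {a..b} (\<lambda>u. cis (2*pi* snd (f (g u))/th))"
  unfolding continuous_on_def
proof
  fix u assume u: "u \<in> {a..b}"
  define Z where "Z = (\<lambda>u. cis (2*pi* snd (f (g u))/th))"
  define F where "F = (\<lambda>v. ((dist (g u) s)\<^sup>2 + (dist (g v) s)\<^sup>2 - (dist (g u) (g v))\<^sup>2) / (2 * dist (g u) s * dist (g v) s))"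
  have gc: "continuous_on {a..b} g" using li_cont[OF g] .
  have pos: "\<And>v. v \<in> {a..b} \<Longrightarrow> dist (g v) s > 0" using win_facts(2) W by blast
  have Fc: "continuous_on {a..b} F" unfolding F_def
    using pos[OF u] pos by (intro continuous_intros gc) auto
  have Fr: "\<forall>v\<in>{a..b}. -1 \<le> F v \<and> F v \<le> 1"
    using cos_formula W u unfolding F_def by (metis cos_ge_minus_one cos_le_one)
  have "continuous_on {a..b} (\<lambda>v. arccos (F v))" by (rule continuous_on_arccos[OF Fc Fr])
  then have "((\<lambda>v. arccos (F v)) \<longlongrightarrow> arccos (F u)) (at u within {a..b})"
    using u unfolding continuous_on_def by blast
  moreover have "F u = 1" using pos[OF u] unfolding F_def by (simp add: power2_eq_square)
  ultimately have "((\<lambda>v. arccos (F v)) \<longlongrightarrow> 0) (at u within {a..b})" by simp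
  then have t0: "((\<lambda>v. 2*pi/th * arccos (F v)) \<longlongrightarrow> 0) (at u within {a..b})"
    by (rule tendsto_mult_right_zero)
  have bd: "\<forall>v\<in>{a..b}. norm (Z v - Z u) \<le> 2*pi/th * arccos (F v)"
  proof
    fix v assume v: "v \<in> {a..b}"
    have "norm (Z v - Z u) \<le> 2*pi/th * cone_angdist th (snd (f (g v))) (snd (f (g u)))"
      unfolding Z_def using cis_angdist[OF th(1)] win_facts[of v] win_facts[of u] W u v by auto
    also have "\<dots> = 2*pi/th * arccos (F v)"
      using angdist_arccos[of u v] W u v angdist_sym unfolding F_def by metis
    finally show "norm (Z v - Z u) \<le> 2*pi/th * arccos (F v)" .
  qed
  have ev: "eventually (\<lambda>v. norm (Z v - Z u) \<le> 2*pi/th * arccos (F v)) (at u within {a..b})"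
    using bd unfolding eventually_at_filter by (intro always_eventually) auto
  have "((\<lambda>v. Z v - Z u) \<longlongrightarrow> 0) (at u within {a..b})" by (rule Lim_null_comparison[OF ev t0])
  then show "(Z \<longlongrightarrow> Z u) (at u within {a..b})" by (simp add: LIM_zero_iff)
qed

lemma window_lift:
  assumes W: "\<forall>u\<in>{a..b}. dist (g u) s < e"
  obtains A where "continuous_on {a..b} A" "\<And>u. u\<in>{a..b} \<Longrightarrow> \<exists>k::int. snd (f (g u)) = A u + of_int k * th"
proof -
  have "contractible {a..b}" by (rule convex_imp_contractible) (rule convex_real_interval)
  then obtain hh where hh: "continuous_on {a..b} hh" "\<And>u. u \<in> {a..b} \<Longrightarrow> cis (2*pi * snd (f (g u))/th) = exp (hh u)"
    using continuous_logarithm_on_contractible[OF z_cont[OF W]] by (metis cis_neq_zero)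
  define A where "A = (\<lambda>u. th/(2*pi) * Im (hh u))"
  show ?thesis
  proof (rule that[of A])
    show "continuous_on {a..b} A" unfolding A_def by (intro continuous_intros hh(1))
    fix u assume u: "u \<in> {a..b}"
    have "exp (hh u) = exp (\<i> * complex_of_real (2*pi * snd (f (g u))/th))"
      using hh(2)[OF u] by (simp add: cis_conv_exp)
    then obtain n :: int where n: "hh u = \<i> * complex_of_real (2*pi * snd (f (g u))/th) + of_int (2*n) * pi * \<i>"
      unfolding exp_eq by blast
    then have "Im (hh u) = 2*pi * snd (f (g u))/th + 2 * of_int n * pi" by simp
    then have "A u = snd (f (g u)) + of_int n * th" using th(1) unfolding A_def by (simp add: field_simps)
    then show "\<exists>k::int. snd (f (g u)) = A u + of_int k * th" by (intro exI[of _ "-n"]) simp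
  qed
qed

lemma window_main:
  assumes ab: "a \<le> b" and W: "\<forall>u\<in>{a..b}. dist (g u) s < e"
  obtains A w where "continuous_on {a..b} A" "\<And>u. u\<in>{a..b} \<Longrightarrow> \<exists>k::int. snd (f (g u)) = A u + of_int k * th"
    "cmod w = 1"
    "\<And>u. u\<in>{a..b} \<Longrightarrow> complex_of_real (dist (g u) s) * cis (A u)
        = complex_of_real (dist (g a) s) * cis (A a) + of_real (u - a) * w"
proof -
  obtain A where A: "continuous_on {a..b} A" "\<And>u. u\<in>{a..b} \<Longrightarrow> \<exists>k::int. snd (f (g u)) = A u + of_int k * th"
    using window_lift[OF W] by blast
  have "uniformly_continuous_on {a..b} A" by (rule compact_uniformly_continuous[OF A(1)]) simp
  then obtain d1 where d1: "d1 > 0" "\<And>x x'. x\<in>{a..b} \<Longrightarrow> x'\<in>{a..b} \<Longrightarrow> dist x' x < d1 \<Longrightarrow> dist (A x') (A x) < th/2"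
    unfolding uniformly_continuous_on_def using th(1) by (metis half_gt_zero)
  obtain d0 where d0: "d0 > 0" "\<And>u u'. u \<in> {a..b} \<Longrightarrow> \<bar>u - u'\<bar> < d0 \<Longrightarrow> dist (g u) (g u') = \<bar>u - u'\<bar>"
    using li_uniform[OF g, of "{a..b}"] by auto
  define P where "P = (\<lambda>u. complex_of_real (dist (g u) s) * cis (A u))"
  have iso: "cmod (P u - P u') = \<bar>u - u'\<bar>" if u: "u\<in>{a..b}" "u'\<in>{a..b}" "\<bar>u - u'\<bar> < min d0 d1" for u u'
  proof -
    note fu = win_facts[of u] and fv = win_facts[of u']
    have Wu: "dist (g u) s < e" "dist (g u') s < e" using W u by auto
    obtain k k' where kk: "snd (f (g u)) = A u + of_int k * th" "snd (f (g u')) = A u' + of_int k' * th"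
      using A(2) u by blast
    have "\<bar>A u - A u'\<bar> < th/2" using d1(2)[of u' u] u by (simp add: dist_real_def)
    then have ad: "cone_angdist th (snd (f (g u))) (snd (f (g u'))) = \<bar>A u - A u'\<bar>"
      using angdist_lift[OF th(1) fu(3,4)[OF Wu(1)] fv(3,4)[OF Wu(2)] kk] by simp
    have "(cmod (P u - P u'))\<^sup>2 = (dist (g u) s)\<^sup>2 + (dist (g u') s)\<^sup>2
         - 2 * dist (g u) s * dist (g u') s * cos (A u - A u')"
      unfolding P_def by (rule norm_cis_formula)
    also have "\<dots> = (dist (g u) (g u'))\<^sup>2"
    proof -
      have X0: "0 \<le> (dist (g u) s)\<^sup>2 + (dist (g u') s)\<^sup>2 - 2 * dist (g u) s * dist (g u') s * cos (A u - A u')"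
        by (rule lawcos_nonneg) auto
      have "cos (A u - A u') = cos (cone_angdist th (snd (f (g u))) (snd (f (g u'))))"
        using ad by (metis cos_abs_real)
      then show ?thesis using dist_formula[OF fu(1)[OF Wu(1)] fv(1)[OF Wu(2)]] X0 by simp
    qed
    also have "\<dots> = \<bar>u - u'\<bar>\<^sup>2" using d0(2)[OF u(1)] u(3) by simp
    finally have "(cmod (P u - P u'))\<^sup>2 = \<bar>u - u'\<bar>\<^sup>2" .
    then show ?thesis by (rule power2_eq_imp_eq) auto
  qed
  have mpos: "0 < min d0 d1" using d0(1) d1(1) by simp
  obtain w where w: "cmod w = 1" "\<And>u. u\<in>{a..b} \<Longrightarrow> P u = P a + of_real (u - a) * w"
    using affine_of_local_iso[of a b "min d0 d1" P, OF ab mpos iso] by blast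
  show ?thesis
  proof (rule that[OF A(1) A(2) w(1)])
    fix u assume "u \<in> {a..b}"
    from w(2)[OF this] show "complex_of_real (dist (g u) s) * cis (A u)
        = complex_of_real (dist (g a) s) * cis (A a) + of_real (u - a) * w" unfolding P_def .
  qed
qed

end


definition cscale :: "real \<Rightarrow> real \<times> real \<Rightarrow> real \<times> real" where
  "cscale m q = (m * fst q, if m * fst q = 0 then 0 else snd q)"

lemma sqrt_sum_le: "sqrt (x\<^sup>2 + y\<^sup>2) \<le> \<bar>x\<bar> + \<bar>y\<bar>"
  using sqrt_add_le_add_sqrt[of "x\<^sup>2" "y\<^sup>2"] by simp

context chart
begin

lemma cscale_in: assumes "q \<in> f ` U" "0 \<le> m" "m \<le> 1" shows "cscale m q \<in> f ` U"
proof -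
  have q: "0 \<le> fst q" "0 \<le> snd q" "snd q < th" "fst q < r" using assms(1) unfolding fU cone_carrier_def by auto
  have "m * fst q \<le> fst q" using q(1) assms(2,3) by (simp add: mult_left_le_one_le)
  then show ?thesis unfolding fU cone_carrier_def cscale_def using q assms(2) th(1) by auto
qed

lemma cscale_1: assumes "q \<in> f ` U" shows "cscale 1 q = q"
  using assms unfolding fU cone_carrier_def cscale_def by (cases q) auto

lemma cscale_0: "cscale 0 q = cone_vertex"
  by (simp add: cscale_def cone_vertex_def)

lemma cscale_dist:
  assumes q: "q \<in> f ` U" and q': "q' \<in> f ` U" and m: "0 \<le> m" "m \<le> 1" and m': "0 \<le> m'" "m' \<le> 1"
  shows "cone_dist th (cscale m q) (cscale m' q') \<le> \<bar>m - m'\<bar> * r + 2 * cone_dist th q q'"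
proof -
  obtain \<rho> t where qq: "q = (\<rho>, t)" by fastforce
  obtain \<rho>' t' where qq': "q' = (\<rho>', t')" by fastforce
  have b: "0 \<le> \<rho>" "0 \<le> t" "t < th" "\<rho> < r" using q unfolding qq fU cone_carrier_def by auto
  have b': "0 \<le> \<rho>'" "0 \<le> t'" "t' < th" "\<rho>' < r" using q' unfolding qq' fU cone_carrier_def by auto
  define c where "c = cos (cone_angdist th t t')"
  define a where "a = m * \<rho>"
  define bb where "bb = m' * \<rho>'"
  have a0: "0 \<le> a" "0 \<le> bb" using b b' m m' by (auto simp: a_def bb_def)
  define t1 where "t1 = (if a = 0 then 0 else t)"
  define t1' where "t1' = (if bb = 0 then 0 else t')"
  have sc: "cscale m q = (a, t1)" "cscale m' q' = (bb, t1')"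
    by (simp_all add: cscale_def qq qq' a_def bb_def t1_def t1'_def)
  have t1b: "0 \<le> t1" "t1 < th" "0 \<le> t1'" "t1' < th" using b b' th(1) by (auto simp: t1_def t1'_def)
  have c1: "c \<le> 1" by (simp add: c_def)
  have CD: "cone_dist th q q' = sqrt ((\<rho> - \<rho>')\<^sup>2 + 2*(\<rho>*\<rho>')*(1 - c))"
    unfolding qq qq' cone_dist_formula[OF th b(2,3) b'(2,3)] c_def[symmetric]
    by (simp add: power2_eq_square algebra_simps)
  have S: "cone_dist th (cscale m q) (cscale m' q') = sqrt ((a - bb)\<^sup>2 + 2*(a*bb)*(1 - c))"
  proof (cases "a = 0 \<or> bb = 0")
    case True
    then have "a * bb = 0" by auto
    then show ?thesis unfolding sc cone_dist_formula[OF th t1b] using True by (auto simp: power2_eq_square algebra_simps)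
  next
    case False
    then have "t1 = t" "t1' = t'" by (auto simp: t1_def t1'_def)
    then show ?thesis unfolding sc cone_dist_formula[OF th t1b]
      by (simp add: c_def power2_eq_square algebra_simps)
  qed
  have abb: "a * bb \<le> \<rho> * \<rho>'"
  proof -
    have "a \<le> \<rho>" "bb \<le> \<rho>'" using b b' m m' by (auto simp: a_def bb_def mult_left_le_one_le)
    then show ?thesis using a0 by (intro mult_mono) auto
  qed
  have "(a - bb)\<^sup>2 + 2*(a*bb)*(1 - c) \<le> (a - bb)\<^sup>2 + (sqrt ((\<rho> - \<rho>')\<^sup>2 + 2*(\<rho>*\<rho>')*(1 - c)))\<^sup>2"
  proof -
    have "0 \<le> (\<rho> - \<rho>')\<^sup>2 + 2*(\<rho>*\<rho>')*(1 - c)" using b b' c1 by simp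
    then have "(sqrt ((\<rho> - \<rho>')\<^sup>2 + 2*(\<rho>*\<rho>')*(1 - c)))\<^sup>2 = (\<rho> - \<rho>')\<^sup>2 + 2*(\<rho>*\<rho>')*(1 - c)" by simp
    moreover have "2*(a*bb)*(1 - c) \<le> 2*(\<rho>*\<rho>')*(1 - c)" using abb c1 by (intro mult_right_mono) auto
    moreover have "0 \<le> (\<rho> - \<rho>')\<^sup>2" by simp
    ultimately show ?thesis by linarith
  qed
  then have "cone_dist th (cscale m q) (cscale m' q') \<le> sqrt ((a - bb)\<^sup>2 + (cone_dist th q q')\<^sup>2)"
    unfolding S CD by (rule real_sqrt_le_mono)
  also have "\<dots> \<le> \<bar>a - bb\<bar> + \<bar>cone_dist th q q'\<bar>" by (rule sqrt_sum_le)
  also have "\<bar>cone_dist th q q'\<bar> = cone_dist th q q'" unfolding CD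
    by (rule abs_of_nonneg) (use b b' c1 in simp)
  also have "\<bar>a - bb\<bar> \<le> \<bar>m - m'\<bar> * r + \<bar>\<rho> - \<rho>'\<bar>"
  proof -
    have "a - bb = (m - m') * \<rho> + m' * (\<rho> - \<rho>')" by (simp add: a_def bb_def algebra_simps)
    then have "\<bar>a - bb\<bar> \<le> \<bar>m - m'\<bar> * \<rho> + m' * \<bar>\<rho> - \<rho>'\<bar>"
      using b(1) m' by (metis abs_mult abs_of_nonneg abs_triangle_ineq)
    moreover have "\<bar>m - m'\<bar> * \<rho> \<le> \<bar>m - m'\<bar> * r" using b by (intro mult_left_mono) auto
    moreover have "m' * \<bar>\<rho> - \<rho>'\<bar> \<le> \<bar>\<rho> - \<rho>'\<bar>" using m' by (simp add: mult_left_le_one_le)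
    ultimately show ?thesis by linarith
  qed
  also have "\<bar>\<rho> - \<rho>'\<bar> \<le> cone_dist th q q'"
  proof -
    have "sqrt ((\<rho> - \<rho>')\<^sup>2) \<le> cone_dist th q q'" unfolding CD
      using b b' c1 by (intro real_sqrt_le_mono) simp
    then show ?thesis by simp
  qed
  finally show ?thesis by simp
qed

lemma contract_loop:
  assumes pU: "\<And>x. x \<in> {0..1} \<Longrightarrow> p x \<in> U" and L: "0 \<le> L"
    and lip: "\<And>x y. x \<in> {0..1} \<Longrightarrow> y \<in> {0..1} \<Longrightarrow> dist (p x) (p y) \<le> L * \<bar>x - y\<bar>"
    and loop: "p 1 = p 0"
  shows "homotopic_loops UNIV p (\<lambda>u. s)"
proof -
  have inj: "inj_on f U" using finj by (meson inj_onI)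
  define h where "h = (\<lambda>z. inv_into U f (cscale (1 - fst z) (f (p (snd z)))))"
  have hU: "z \<in> {0..1} \<times> {0..1} \<Longrightarrow> h z \<in> U" for z
    unfolding h_def by (rule inv_into_into) (rule cscale_in, use pU in auto)
  have fh: "z \<in> {0..1} \<times> {0..1} \<Longrightarrow> f (h z) = cscale (1 - fst z) (f (p (snd z)))" for z
    unfolding h_def by (rule f_inv_into_f) (rule cscale_in, use pU in auto)
  have r0: "0 \<le> r" using sU carrier(5)[OF sU] carrier(1)[OF sU] by linarith
  have hd: "dist (h z) (h z') \<le> (r + 2*L) * dist z z'" if z: "z \<in> {0..1} \<times> {0..1}" "z' \<in> {0..1} \<times> {0..1}" for z z'
  proof -
    have "dist (h z) (h z') = cone_dist th (f (h z)) (f (h z'))" using iso[OF hU[OF z(1)] hU[OF z(2)]] by simp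
    also have "\<dots> \<le> \<bar>(1 - fst z) - (1 - fst z')\<bar> * r + 2 * cone_dist th (f (p (snd z))) (f (p (snd z')))"
      unfolding fh[OF z(1)] fh[OF z(2)] by (rule cscale_dist) (use z pU in auto)
    also have "cone_dist th (f (p (snd z))) (f (p (snd z'))) = dist (p (snd z)) (p (snd z'))"
      using iso pU z by auto
    also have "\<dots> \<le> L * \<bar>snd z - snd z'\<bar>" using lip z by auto
    finally have "dist (h z) (h z') \<le> \<bar>fst z' - fst z\<bar> * r + 2 * (L * \<bar>snd z - snd z'\<bar>)" by simp
    moreover have "\<bar>fst z' - fst z\<bar> \<le> dist z z'" "\<bar>snd z - snd z'\<bar> \<le> dist z z'"
      by (metis dist_commute dist_fst_le dist_real_def) (metis dist_snd_le dist_real_def)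
    ultimately have "\<bar>fst z' - fst z\<bar> * r \<le> dist z z' * r" "L * \<bar>snd z - snd z'\<bar> \<le> L * dist z z'"
      "dist (h z) (h z') \<le> \<bar>fst z' - fst z\<bar> * r + 2 * (L * \<bar>snd z - snd z'\<bar>)"
      using r0 L by (auto intro: mult_right_mono mult_left_mono)
    then have "dist (h z) (h z') \<le> dist z z' * r + 2 * (L * dist z z')" by linarith
    then show ?thesis by (simp add: algebra_simps)
  qed
  have cont: "continuous_on ({0..1} \<times> {0..1}) h"
    unfolding continuous_on_iff
  proof (intro ballI allI impI)
    fix z :: "real \<times> real" and \<epsilon> :: real assume z: "z \<in> {0..1} \<times> {0..1}" and \<epsilon>: "0 < \<epsilon>"
    show "\<exists>d>0. \<forall>z'\<in>{0..1} \<times> {0..1}. dist z' z < d \<longrightarrow> dist (h z') (h z) < \<epsilon>"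
    proof (intro exI[of _ "\<epsilon> / (r + 2*L + 1)"] conjI ballI impI)
      show "0 < \<epsilon> / (r + 2*L + 1)" using \<epsilon> r0 L by simp
      fix z' assume z': "z' \<in> {0..1} \<times> {0..1}" and dz: "dist z' z < \<epsilon> / (r + 2*L + 1)"
      have "dist (h z') (h z) \<le> (r + 2*L) * dist z' z" by (rule hd[OF z' z])
      also have "\<dots> \<le> (r + 2*L + 1) * dist z' z" by (simp add: mult_right_mono)
      also have "\<dots> < \<epsilon>" using dz r0 L by (simp add: field_simps)
      finally show "dist (h z') (h z) < \<epsilon>" .
    qed
  qed
  show ?thesis unfolding homotopic_loops
  proof (intro exI[of _ h] conjI ballI)
    show "continuous_on ({0..1} \<times> {0..1}) h" by (rule cont)
    show "h \<in> {0..1} \<times> {0..1} \<rightarrow> UNIV" by simp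
    fix x :: real assume x: "x \<in> {0..1}"
    show "h (0, x) = p x" unfolding h_def using cscale_1[of "f (p x)"] pU[OF x] inj by simp
    show "h (1, x) = s" unfolding h_def using cscale_0 inv_into_f_f[OF inj sU] by (simp add: fs)
  next
    fix t :: real assume t: "t \<in> {0..1}"
    show "pathfinish (h \<circ> Pair t) = pathstart (h \<circ> Pair t)"
      by (simp add: pathfinish_def pathstart_def h_def loop)
  qed
qed

end


context chart_curve
begin

lemma wrap:
  assumes t0: "dist (g t0) s < e / (2 + sqrt ((1 - cos th)/(1 + cos th)))"
  shows "\<exists>t1 t2. t1 < t2 \<and> g t1 = g t2 \<and> homotopic_loops UNIV (g \<circ> (\<lambda>u. t1 + u*(t2-t1))) (\<lambda>u. s)"
proof -
  define c where "c = cos th"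
  have c1: "c < 1" unfolding c_def using cos_monotone_0_pi[of 0 th] th by simp
  have c2: "-1 < c" unfolding c_def using cos_monotone_0_pi[of th pi] th by simp
  define K where "K = sqrt ((1 - c)/(1 + c))"
  have K0: "K > 0" unfolding K_def using c1 c2 by simp
  have K2: "K\<^sup>2 = (1 - c)/(1 + c)" unfolding K_def using c1 c2 by simp
  define C where "C = e / (2 + K)"
  have C0: "C > 0" using e(1) K0 by (simp add: C_def)
  have gt0: "dist (g t0) s < C" using t0 by (simp add: C_def K_def c_def)
  define R where "R = C * (1 + K)"
  have "C + R = C * (2 + K)" by (simp add: R_def algebra_simps)
  also have "\<dots> = e" using K0 by (simp add: C_def)
  finally have CR: "C + R = e" .
  define a where "a = t0 - R"
  define b where "b = t0 + R"
  have ab: "a \<le> b" using C0 K0 by (simp add: a_def b_def R_def)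
  have t0W: "t0 \<in> {a..b}" using C0 K0 by (simp add: a_def b_def R_def)
  have W: "\<forall>u\<in>{a..b}. dist (g u) s < e"
  proof
    fix u assume u: "u \<in> {a..b}"
    have "dist (g u) s \<le> dist (g u) (g t0) + dist (g t0) s" by (rule dist_triangle)
    also have "dist (g u) (g t0) \<le> \<bar>u - t0\<bar>" by (rule li_lip[OF g])
    also have "\<bar>u - t0\<bar> \<le> R" using u by (auto simp: a_def b_def)
    finally show "dist (g u) s < e" using gt0 CR by linarith
  qed
  obtain A w where A: "continuous_on {a..b} A" "\<And>u. u\<in>{a..b} \<Longrightarrow> \<exists>k::int. snd (f (g u)) = A u + of_int k * th"
    and w1: "cmod w = 1"
    and Aff: "\<And>u. u\<in>{a..b} \<Longrightarrow> complex_of_real (dist (g u) s) * cis (A u)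
        = complex_of_real (dist (g a) s) * cis (A a) + of_real (u - a) * w"
    using window_main[OF ab W] by blast
  define P where "P = (\<lambda>u. complex_of_real (dist (g u) s) * cis (A u))"
  have cmodP: "cmod (P u) = dist (g u) s" for u by (simp add: P_def norm_mult)
  define p0 where "p0 = P t0"
  define \<mu> where "\<mu> = Re p0 * Re w + Im p0 * Im w"
  define m where "m = t0 - \<mu>"
  define p where "p = p0 - of_real \<mu> * w"
  have ww: "(Re w)\<^sup>2 + (Im w)\<^sup>2 = 1" using w1 by (simp add: cmod_def)
  have Pm: "P u = p + of_real (u - m) * w" if "u \<in> {a..b}" for u
  proof -
    have "P u - P t0 = of_real (u - a) * w - of_real (t0 - a) * w"
      using Aff[OF that] Aff[OF t0W] unfolding P_def by simp
    also have "\<dots> = of_real (u - t0) * w" by (simp add: algebra_simps)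
    finally have "P u = P t0 + of_real (u - t0) * w" by (simp add: algebra_simps)
    then show ?thesis by (simp add: p_def m_def p0_def algebra_simps)
  qed
  have orth: "Re p * Re w + Im p * Im w = 0"
  proof -
    have "Re p * Re w + Im p * Im w = \<mu> - \<mu> * ((Re w)\<^sup>2 + (Im w)\<^sup>2)"
      by (simp add: p_def \<mu>_def power2_eq_square algebra_simps)
    then show ?thesis using ww by simp
  qed
  have nsq: "(cmod (p + of_real v * w))\<^sup>2 = (cmod p)\<^sup>2 + v\<^sup>2" for v
  proof -
    have "(cmod (p + of_real v * w))\<^sup>2 = (Re p + v * Re w)\<^sup>2 + (Im p + v * Im w)\<^sup>2" by (simp add: cmod_power2)
    also have "\<dots> = (Re p)\<^sup>2 + (Im p)\<^sup>2 + 2 * v * (Re p * Re w + Im p * Im w) + v\<^sup>2 * ((Re w)\<^sup>2 + (Im w)\<^sup>2)"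
      by (simp add: power2_eq_square algebra_simps)
    also have "\<dots> = (cmod p)\<^sup>2 + v\<^sup>2" using orth ww by (simp add: cmod_power2)
    finally show ?thesis .
  qed
  define d where "d = cmod p"
  have mu_le: "\<bar>\<mu>\<bar> \<le> cmod p0"
  proof -
    have "\<mu>\<^sup>2 \<le> (cmod p0)\<^sup>2"
    proof -
      have "p0 = p + of_real (t0 - m) * w" using Pm[OF t0W] by (simp add: p0_def)
      then have "(cmod p0)\<^sup>2 = d\<^sup>2 + \<mu>\<^sup>2" using nsq[of "t0 - m"] by (simp add: m_def d_def)
      then show ?thesis by simp
    qed
    then show ?thesis by (metis abs_norm_cancel power2_abs power2_le_imp_le norm_ge_zero)
  qed
  have d_le: "d \<le> cmod p0"
  proof -
    have "p0 = p + of_real (t0 - m) * w" using Pm[OF t0W] by (simp add: p0_def)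
    then have "(cmod p0)\<^sup>2 = d\<^sup>2 + \<mu>\<^sup>2" using nsq[of "t0 - m"] by (simp add: m_def d_def)
    then have "d\<^sup>2 \<le> (cmod p0)\<^sup>2" by simp
    then show ?thesis by (rule power2_le_imp_le) simp
  qed
  have p0C: "cmod p0 < C" using gt0 cmodP by (simp add: p0_def)
  have muC: "- C < \<mu>" "\<mu> < C" using mu_le p0C by (auto simp: abs_le_iff)
  have CK: "0 < C * K" using C0 K0 by simp
  have Rs: "R = C + C * K" by (simp add: R_def algebra_simps)
  have mW: "m \<in> {a..b}" unfolding m_def a_def b_def Rs atLeastAtMost_iff using muC CK by linarith
  have d0: "d > 0"
  proof -
    have "P m = p" using Pm[OF mW] by simp
    then have "d = dist (g m) s" using cmodP[of m] by (simp add: d_def)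
    then show ?thesis using win_facts(2) W mW by blast
  qed
  define V where "V = d * K"
  have V0: "V > 0" using d0 K0 by (simp add: V_def)
  have VC: "V < C * K" using d_le p0C K0 by (simp add: V_def)
  have inW: "m + v \<in> {a..b}" "m - v \<in> {a..b}" if "v \<in> {0..V}" for v
  proof -
    have "\<bar>m - t0\<bar> < C" using mu_le p0C by (simp add: m_def)
    then show "m + v \<in> {a..b}" "m - v \<in> {a..b}" using that VC by (auto simp: a_def b_def R_def algebra_simps)
  qed
  have rho: "dist (g (m + v)) s = sqrt (d\<^sup>2 + v\<^sup>2)" "dist (g (m - v)) s = sqrt (d\<^sup>2 + v\<^sup>2)" if "v \<in> {0..V}" for v
  proof -
    have "(dist (g (m + v)) s)\<^sup>2 = d\<^sup>2 + v\<^sup>2" using nsq[of v] Pm[OF inW(1)[OF that]] cmodP[of "m+v"] by (simp add: d_def)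
    then show "dist (g (m + v)) s = sqrt (d\<^sup>2 + v\<^sup>2)" by (metis real_sqrt_unique zero_le_dist)
    have "(dist (g (m - v)) s)\<^sup>2 = d\<^sup>2 + v\<^sup>2" using nsq[of "-v"] Pm[OF inW(2)[OF that]] cmodP[of "m-v"] by (simp add: d_def)
    then show "dist (g (m - v)) s = sqrt (d\<^sup>2 + v\<^sup>2)" by (metis real_sqrt_unique zero_le_dist)
  qed
  define D where "D = (\<lambda>v. A (m + v) - A (m - v))"
  have Dc: "continuous_on {0..V} D" unfolding D_def
  proof (intro continuous_intros)
    show "continuous_on {0..V} (\<lambda>v. A (m + v))"
      by (rule continuous_on_compose2[OF A(1)], intro continuous_intros, use inW in blast)
    show "continuous_on {0..V} (\<lambda>v. A (m - v))"
      by (rule continuous_on_compose2[OF A(1)], intro continuous_intros, use inW in blast)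
  qed
  have cosD: "cos (D v) = (d\<^sup>2 - v\<^sup>2) / (d\<^sup>2 + v\<^sup>2)" if v: "v \<in> {0..V}" for v
  proof -
    define r1 where "r1 = dist (g (m + v)) s"
    define r2 where "r2 = dist (g (m - v)) s"
    have E1: "Re (P (m + v) * cnj (P (m - v))) = r1 * r2 * cos (D v)"
      by (simp add: P_def D_def r1_def r2_def cos_diff algebra_simps)
    have E2: "Re (P (m + v) * cnj (P (m - v))) = d\<^sup>2 - v\<^sup>2"
    proof -
      have e1: "P (m+v) = p + of_real v * w" using Pm[OF inW(1)[OF v]] by simp
      have e2: "P (m-v) = p - of_real v * w" using Pm[OF inW(2)[OF v]] by simp
      have "Re (P (m + v) * cnj (P (m - v))) = (Re p)\<^sup>2 + (Im p)\<^sup>2 - v\<^sup>2 * ((Re w)\<^sup>2 + (Im w)\<^sup>2)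
          - v * (Re p * Re w + Im p * Im w) + v * (Re p * Re w + Im p * Im w)"
        unfolding e1 e2 by (simp add: power2_eq_square algebra_simps)
      then have "Re (P (m + v) * cnj (P (m - v))) = (Re p)\<^sup>2 + (Im p)\<^sup>2 - v\<^sup>2 * ((Re w)\<^sup>2 + (Im w)\<^sup>2)"
        by simp
      then show ?thesis using ww by (simp add: d_def cmod_power2)
    qed
    have E3: "r1 * r2 = d\<^sup>2 + v\<^sup>2" using rho[OF v] unfolding r1_def r2_def
      by (simp add: add_nonneg_nonneg)
    have pos: "d\<^sup>2 + v\<^sup>2 > 0" using d0 by (simp add: add_pos_nonneg)
    have "cos (D v) * (d\<^sup>2 + v\<^sup>2) = d\<^sup>2 - v\<^sup>2" by (metis E1 E2 E3 mult.commute)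
    then show ?thesis using pos by (intro eq_divide_imp) auto
  qed
  have Dlt: "\<bar>D v\<bar> < pi" if v: "v \<in> {0..V}" for v
  proof (rule ccontr)
    assume "\<not> \<bar>D v\<bar> < pi"
    then have "pi \<le> \<bar>D v\<bar>" by simp
    moreover have "\<bar>D 0\<bar> \<le> pi" by (simp add: D_def)
    moreover have "continuous_on {0..v} (\<lambda>x. \<bar>D x\<bar>)"
      by (intro continuous_intros continuous_on_subset[OF Dc]) (use v in auto)
    ultimately obtain x where x: "0 \<le> x" "x \<le> v" "\<bar>D x\<bar> = pi"
      using IVT'[of "\<lambda>x. \<bar>D x\<bar>" 0 pi v] v by auto
    have xV: "x \<in> {0..V}" using x v by auto
    have "cos (D x) = -1" using x(3) by (metis cos_abs_real cos_pi)
    then have "(d\<^sup>2 - x\<^sup>2) / (d\<^sup>2 + x\<^sup>2) = -1" using cosD[OF xV] by simp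
    moreover have "d\<^sup>2 + x\<^sup>2 > 0" using d0 by (simp add: add_pos_nonneg)
    moreover have "d\<^sup>2 - x\<^sup>2 = ((d\<^sup>2 - x\<^sup>2) / (d\<^sup>2 + x\<^sup>2)) * (d\<^sup>2 + x\<^sup>2)"
      using d0 by (simp add: add_pos_nonneg)
    ultimately have "d\<^sup>2 - x\<^sup>2 = - 1 * (d\<^sup>2 + x\<^sup>2)" by metis
    then have "d\<^sup>2 = 0" by (simp add: algebra_simps)
    then show False using d0 by simp
  qed
  have VV: "V \<in> {0..V}" using V0 by simp
  have "cos \<bar>D V\<bar> = cos th"
  proof -
    have "V\<^sup>2 = d\<^sup>2 * ((1 - c)/(1 + c))" using K2 by (simp add: V_def power_mult_distrib)
    moreover have "1 + c > 0" using c2 by simp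
    ultimately have "(d\<^sup>2 - V\<^sup>2) / (d\<^sup>2 + V\<^sup>2) = c" using d0 by (simp add: field_simps)
    then show ?thesis using cosD[OF VV] by (simp add: c_def)
  qed
  then have DV: "\<bar>D V\<bar> = th"
  proof (rule cos_inj_pi[rotated 4])
    show "0 \<le> \<bar>D V\<bar>" by simp
    show "\<bar>D V\<bar> \<le> pi" using Dlt[OF VV] by linarith
    show "0 \<le> th" "th \<le> pi" using th by linarith+
  qed
  obtain k1 where k1: "snd (f (g (m + V))) = A (m + V) + of_int k1 * th" using A(2) inW(1)[OF VV] by blast
  obtain k2 where k2: "snd (f (g (m - V))) = A (m - V) + of_int k2 * th" using A(2) inW(2)[OF VV] by blast
  obtain j :: int where j: "snd (f (g (m + V))) - snd (f (g (m - V))) = of_int j * th"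
  proof (cases "D V \<ge> 0")
    case True
    then have "D V = th" using DV by simp
    then show ?thesis using k1 k2 by (intro that[of "k1 - k2 + 1"]) (simp add: D_def algebra_simps)
  next
    case False
    then have "D V = - th" using DV by simp
    then show ?thesis using k1 k2 by (intro that[of "k1 - k2 - 1"]) (simp add: D_def algebra_simps)
  qed
  have "\<bar>snd (f (g (m + V))) - snd (f (g (m - V)))\<bar> < th"
    using win_facts(3,4)[of "m+V"] win_facts(3,4)[of "m-V"] W inW[OF VV] by auto
  then have "\<bar>real_of_int j\<bar> * th < 1 * th" using j th(1) by (simp add: abs_mult)
  then have "\<bar>real_of_int j\<bar> < 1" using th(1) by (meson mult_less_cancel_right_pos)
  then have "j = 0" by linarith
  then have tau: "snd (f (g (m + V))) = snd (f (g (m - V)))" using j by simp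
  have U1: "g (m + V) \<in> U" "g (m - V) \<in> U" using win_facts(1) W inW[OF VV] by auto
  have "fst (f (g (m + V))) = fst (f (g (m - V)))" using fst_dist[OF U1(1)] fst_dist[OF U1(2)] rho[OF VV] by simp
  then have "f (g (m - V)) = f (g (m + V))" using tau by (simp add: prod_eq_iff)
  then have geq: "g (m - V) = g (m + V)" using finj U1 by metis
  define t1 where "t1 = m - V"
  define t2 where "t2 = m + V"
  have t12: "t1 < t2" using V0 by (simp add: t1_def t2_def)
  have "homotopic_loops UNIV (g \<circ> (\<lambda>u. t1 + u*(t2-t1))) (\<lambda>u. s)"
  proof (rule contract_loop)
    fix x :: real assume x: "x \<in> {0..1}"
    have "t1 + x*(t2-t1) \<le> t1 + 1*(t2-t1)" using x t12 by (intro add_left_mono mult_right_mono) auto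
    moreover have "t1 \<le> t1 + x*(t2-t1)" using x t12 by simp
    ultimately have "t1 + x*(t2-t1) - m \<in> {-V..V}" by (simp add: t1_def t2_def)
    then have "t1 + x*(t2-t1) \<in> {a..b}"
      using inW[of "t1 + x*(t2-t1) - m"] inW[of "m - (t1 + x*(t2-t1))"] by (cases "t1 + x*(t2-t1) - m \<ge> 0") auto
    then show "(g \<circ> (\<lambda>u. t1 + u*(t2-t1))) x \<in> U" using win_facts(1) W by auto
  next
    show "0 \<le> t2 - t1" using t12 by simp
  next
    fix x y :: real
    have "dist (g (t1 + x*(t2-t1))) (g (t1 + y*(t2-t1))) \<le> \<bar>(t1 + x*(t2-t1)) - (t1 + y*(t2-t1))\<bar>"
      by (rule li_lip[OF g])
    also have "\<dots> = (t2 - t1) * \<bar>x - y\<bar>"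
    proof -
      have "(t1 + x*(t2-t1)) - (t1 + y*(t2-t1)) = (t2 - t1) * (x - y)" by (simp add: algebra_simps)
      then show ?thesis using t12 by (simp add: abs_mult)
    qed
    finally show "dist ((g \<circ> (\<lambda>u. t1 + u*(t2-t1))) x) ((g \<circ> (\<lambda>u. t1 + u*(t2-t1))) y) \<le> (t2 - t1) * \<bar>x - y\<bar>"
      by simp
  next
    show "(g \<circ> (\<lambda>u. t1 + u*(t2-t1))) 1 = (g \<circ> (\<lambda>u. t1 + u*(t2-t1))) 0"
      using geq by (simp add: t1_def t2_def add.commute)
  qed
  then show ?thesis using t12 geq unfolding t1_def t2_def by blast
qed

end


lemma point_bound:
  fixes s :: "'a::metric_space"
  assumes th: "0 < th" "th < pi" and cp: "conical_point th s"
  shows "\<exists>C>0. \<forall>g. geodesic g \<longrightarrow> (\<forall>t. C \<le> dist (g t) s)"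
proof -
  obtain U and f :: "'a \<Rightarrow> real \<times> real" and r where U: "open U" "s \<in> U" "0 < r" "f s = cone_vertex"
    "f ` U = {q \<in> cone_carrier th. fst q < r}" "\<forall>x\<in>U. \<forall>y\<in>U. cone_dist th (f x) (f y) = dist x y"
    using cp unfolding conical_point_def by blast
  obtain e where e: "e > 0" "ball s e \<subseteq> U" using open_contains_ball U(1,2) by blast
  interpret chart th U f r s e
    by unfold_locales (use th U e in auto)
  define C where "C = e / (2 + sqrt ((1 - cos th)/(1 + cos th)))"
  have c2: "-1 < cos th" using cos_monotone_0_pi[of th pi] th by simp
  have K0: "0 \<le> sqrt ((1 - cos th)/(1 + cos th))" using c2 by simp
  show ?thesis
  proof (intro exI[of _ C] conjI allI impI)
    show "C > 0" unfolding C_def using e(1) K0 by (intro divide_pos_pos) linarith+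
    fix g :: "real \<Rightarrow> 'a" and t assume geo: "geodesic g"
    show "C \<le> dist (g t) s"
    proof (rule ccontr)
      assume "\<not> C \<le> dist (g t) s"
      then have lt: "dist (g t) s < C" by simp
      have li: "local_isometric g" using geo unfolding geodesic_def by blast
      interpret chart_curve th U f r s e g by unfold_locales (rule li)
      obtain t1 t2 where "t1 < t2" "g t1 = g t2" "homotopic_loops UNIV (g \<circ> (\<lambda>u. t1 + u*(t2-t1))) (\<lambda>u. s)"
        using wrap[of t] lt unfolding C_def by blast
      then show False using geo unfolding geodesic_def by blast
    qed
  qed
qed

theorem lemma5p3:
  fixes Sing :: "'a::metric_space set" and th :: "'a \<Rightarrow> real"
  assumes "compact (UNIV :: 'a set)" and "connected (UNIV :: 'a set)"
    and "euclidean_cone_metric Sing th"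
    and "\<forall>s\<in>Sing. th s \<in> {0<..<pi} \<union> {2*pi<..}"
  shows "\<exists>C>0. \<forall>g. geodesic g \<longrightarrow> (\<forall>s\<in>Sing. th s < pi \<longrightarrow> (\<forall>t. C \<le> dist (g t) s))"
proof -
  define S' where "S' = {s\<in>Sing. th s < pi}"
  have fin: "finite S'" using assms(3) unfolding euclidean_cone_metric_def S'_def by auto
  have "\<forall>s\<in>S'. \<exists>C>0. \<forall>g. geodesic g \<longrightarrow> (\<forall>t. C \<le> dist (g t) s)"
  proof
    fix s assume s: "s \<in> S'"
    have "0 < th s" "conical_point (th s) s" using s assms(3) unfolding S'_def euclidean_cone_metric_def by auto
    moreover have "th s < pi" using s unfolding S'_def by auto
    ultimately show "\<exists>C>0. \<forall>g. geodesic g \<longrightarrow> (\<forall>t. C \<le> dist (g t) s)" using point_bound by blast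
  qed
  then obtain Cf where Cf: "\<And>s. s \<in> S' \<Longrightarrow> Cf s > 0 \<and> (\<forall>g. geodesic g \<longrightarrow> (\<forall>t. Cf s \<le> dist (g t) s))"
    by metis
  define C where "C = Min (insert 1 (Cf ` S'))"
  have finC: "finite (insert 1 (Cf ` S'))" using fin by simp
  show ?thesis
  proof (intro exI[of _ C] conjI allI impI ballI)
    show "C > 0" unfolding C_def using finC Cf by (auto simp: Min_gr_iff)
    fix g :: "real \<Rightarrow> 'a" and s t assume geo: "geodesic g" and s: "s \<in> Sing" and ths: "th s < pi"
    have sS: "s \<in> S'" using s ths by (simp add: S'_def)
    have "C \<le> Cf s" unfolding C_def using finC sS by (auto intro: Min_le)
    also have "Cf s \<le> dist (g t) s" using Cf[OF sS] geo by blast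
    finally show "C \<le> dist (g t) s" .
  qed
qed


end
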